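(* Let $n\ge 1$ be an integer, $0<\epsilon\le 1$, $0<\tau<1$, and let $G=(V,E)$ be a comparison graph. Suppose that (1) $|E|\ge \dfrac{4n}{\tau^2\epsilon^4}$, (2) $|E|\ge \dfrac{16n}{(1-\tau)^2\epsilon^4}$, and (3) $\dfrac{c(G)}{|E|^2}\le \dfrac{(1-\tau)^2\epsilon^2}{16\sqrt n}$. Then the collision-based algorithm $(G,\tau)$ is an $\epsilon$-uniformity tester for domain $[n]$.
   Context: Notation: $[n]=\{1,\dots,n\}$; $\Delta([n])$ is the set of probability distributions on $[n]$; $P_i$ is the probability of $i$ under $P$; $U_n$ is the uniform distribution on $[n]$; $\|P-Q\|=\sum_{i=1}^n|P_i-Q_i|$ ($\ell_1$ distance). A comparison graph is a finite simple undirected graph $G=(V,E)$. Given $P\in\Delta([n])$, each vertex $v\in V$ is assigned an independent sample $S(v)\sim P$; for an edge $e=\{u,v\}\in E$ the collision indicator is $\mathbf 1_e=\mathbf 1[S(u)=S(v)]$. For $\tau\in[0,1]$, the collision-based algorithm $(G,\tau)$ computes $Z=\sum_{e\in E}\mathbf 1_e$ and $T=|E|\cdot\frac{1+\tau\epsilon^2}{n}$, and outputs YES if $Z<T$ and NO otherwise. It is an $\epsilon$-uniformity tester (for domain $[n]$) if, when $P=U_n$, it outputs YES with probability at least $3/4$, and for every $P\in\Delta([n])$ with $\|P-U_n\|\ge\epsilon$ it outputs NO with probability at least $3/4$. $c(G)$ denotes the number of ordered triples $(u,v,w)$ of distinct vertices with $\{u,v\}\in E$ and $\{v,w\}\in E$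 (equivalently $c(G)=\sum_{v\in V}d_v(d_v-1)$, $d_v$ the degree of $v$). *)

theory Defs
  imports Complex_Main "HOL-Library.FuncSet"
begin

definition is_distrib :: "nat \<Rightarrow> (nat \<Rightarrow> real) \<Rightarrow> bool" where
  "is_distrib n P \<longleftrightarrow> (\<forall>i\<in>{1..n}. P i \<ge> 0) \<and> (\<Sum>i=1..n. P i) = 1"

definition unif :: "nat \<Rightarrow> nat \<Rightarrow> real" where
  "unif n = (\<lambda>i. 1 / real n)"

definition l1dist :: "nat \<Rightarrow> (nat \<Rightarrow> real) \<Rightarrow> (nat \<Rightarrow> real) \<Rightarrow> real" where
  "l1dist n P Q = (\<Sum>i=1..n. \<bar>P i - Q i\<bar>)"

definition comparison_graph :: "'a set \<Rightarrow> 'a set set \<Rightarrow> bool" where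
  "comparison_graph V E \<longleftrightarrow> finite V \<and> E \<subseteq> {{u, v} | u v. u \<in> V \<and> v \<in> V \<and> u \<noteq> v}"

definition cG :: "'a set \<Rightarrow> 'a set set \<Rightarrow> nat" where
  "cG V E = card {(u, v, w). u \<in> V \<and> v \<in> V \<and> w \<in> V \<and> u \<noteq> v \<and> v \<noteq> w \<and> u \<noteq> w
                     \<and> {u, v} \<in> E \<and> {v, w} \<in> E}"

definition collisions :: "'a set set \<Rightarrow> ('a \<Rightarrow> nat) \<Rightarrow> nat" where
  "collisions E S = card {e \<in> E. \<exists>u v. e = {u, v} \<and> u \<noteq> v \<and> S u = S v}"

text \<open>Probability of an event on the i.i.d. samples S(v) ~ P, v in V (product distribution).\<close>
definition prob_samples :: "nat \<Rightarrow> 'a set \<Rightarrow> (nat \<Rightarrow> real) \<Rightarrow> (('a \<Rightarrow> nat) \<Rightarrow> bool) \<Rightarrow> real" where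
  "prob_samples n V P A =
     (\<Sum>S\<in>PiE V (\<lambda>_. {1..n}). (\<Prod>v\<in>V. P (S v)) * (if A S then 1 else 0))"

definition outputs_yes :: "nat \<Rightarrow> real \<Rightarrow> 'a set set \<Rightarrow> real \<Rightarrow> ('a \<Rightarrow> nat) \<Rightarrow> bool" where
  "outputs_yes n \<epsilon> E \<tau> S \<longleftrightarrow>
     real (collisions E S) < real (card E) * (1 + \<tau> * \<epsilon>^2) / real n"

definition is_uniformity_tester :: "nat \<Rightarrow> real \<Rightarrow> 'a set \<Rightarrow> 'a set set \<Rightarrow> real \<Rightarrow> bool" where
  "is_uniformity_tester n \<epsilon> V E \<tau> \<longleftrightarrow>
     prob_samples n V (unif n) (outputs_yes n \<epsilon> E \<tau>) \<ge> 3/4 \<and>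
     (\<forall>P. is_distrib n P \<and> l1dist n P (unif n) \<ge> \<epsilon> \<longrightarrow>
        prob_samples n V P (\<lambda>S. \<not> outputs_yes n \<epsilon> E \<tau> S) \<ge> 3/4)"

end

theory Submission
  imports Defs
begin



definition Expt :: "nat \<Rightarrow> 'a set \<Rightarrow> (nat \<Rightarrow> real) \<Rightarrow> (('a \<Rightarrow> nat) \<Rightarrow> real) \<Rightarrow> real" where
  "Expt n V P f = (\<Sum>S\<in>PiE V (\<lambda>_. {1..n}). (\<Prod>v\<in>V. P (S v)) * f S)"

lemma prob_Ex: "prob_samples n V P A = Expt n V P (\<lambda>S. if A S then 1 else 0)"
  unfolding prob_samples_def Expt_def by simp

lemma Expt_add: "Expt n V P (\<lambda>S. f S + g S) = Expt n V P f + Expt n V P g"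
  unfolding Expt_def by (simp add: distrib_left sum.distrib)

lemma Expt_cmult: "Expt n V P (\<lambda>S. c * f S) = c * Expt n V P f"
  unfolding Expt_def by (simp add: sum_distrib_left mult_ac)

lemma Expt_diff: "Expt n V P (\<lambda>S. f S - g S) = Expt n V P f - Expt n V P g"
  unfolding Expt_def by (simp add: right_diff_distrib sum_subtractf)

lemma Expt_sum: "Expt n V P (\<lambda>S. \<Sum>e\<in>E. f e S) = (\<Sum>e\<in>E. Expt n V P (f e))"
  unfolding Expt_def by (simp add: sum_distrib_left sum.swap[of _ E])

lemma Expt_cong: "(\<And>S. S \<in> PiE V (\<lambda>_. {1..n}) \<Longrightarrow> f S = g S) \<Longrightarrow> Expt n V P f = Expt n V P g"
  unfolding Expt_def by (auto intro: sum.cong)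

lemma Expt_mono: "(\<And>i. i \<in> {1..n} \<Longrightarrow> P i \<ge> 0) \<Longrightarrow> (\<And>S. S \<in> PiE V (\<lambda>_. {1..n}) \<Longrightarrow> f S \<le> g S) \<Longrightarrow> Expt n V P f \<le> Expt n V P g"
  unfolding Expt_def
  apply (rule sum_mono)
  apply (rule mult_left_mono)
   apply simp
  apply (rule prod_nonneg)
  by (auto simp: PiE_def Pi_def)

lemma Expt_prod:
  assumes "finite V"
  shows "Expt n V P (\<lambda>S. \<Prod>v\<in>V. h v (S v)) = (\<Prod>v\<in>V. \<Sum>c\<in>{1..n}. P c * h v c)"
  unfolding Expt_def
  by (subst prod_sum_PiE) (auto simp: assms prod.distrib)

lemma Expt_one:
  assumes "finite V" "(\<Sum>i=1..n. P i) = 1"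
  shows "Expt n V P (\<lambda>S. 1) = 1"
  using Expt_prod[OF assms(1), where P=P and n=n and h="\<lambda>_ _. 1"] assms(2) by simp




definition X :: "'a set \<Rightarrow> ('a \<Rightarrow> nat) \<Rightarrow> real" where
  "X e S = (if \<exists>u v. e = {u, v} \<and> u \<noteq> v \<and> S u = S v then 1 else 0)"

lemma coll_sum: "finite E \<Longrightarrow> real (collisions E S) = (\<Sum>e\<in>E. X e S)"
  unfolding collisions_def X_def by (simp add: sum.If_cases Int_def)

definition H :: "'a set \<Rightarrow> 'a set \<Rightarrow> nat \<Rightarrow> nat \<Rightarrow> 'a \<Rightarrow> nat \<Rightarrow> real" where
  "H e f a b x c = (if x\<in>e then (if c=a then 1 else 0) else 1) * (if x\<in>f then (if c=b then 1 else 0) else 1)"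

lemma X_rep:
  assumes "finite V" "e \<subseteq> V" "e = {u, v}" "u \<noteq> v" "S u \<in> {1..n}" "S v \<in> {1..n}"
  shows "X e S = (\<Sum>a\<in>{1..n}. \<Prod>x\<in>V. (if x\<in>e then (if S x = a then 1 else 0) else 1))"
proof -
  have eq: "(\<Prod>x\<in>V. (if x\<in>e then (if S x = a then 1 else 0) else 1)) = (if S u = a \<and> S v = a then 1 else 0::real)" for a
  proof -
    have "(\<Prod>x\<in>V. (if x\<in>e then (if S x = a then 1 else 0) else 1)) = (\<Prod>x\<in>e. (if S x = a then 1 else 0::real))"
      using prod.inter_restrict[OF assms(1), of "\<lambda>x. if S x = a then 1 else 0::real" e] assms(2)
      by (simp add: Int_absorb1 Int_absorb2 inf.commute)
    also have "\<dots> = (if S u = a \<and> S v = a then 1 else 0)"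
      using assms(3,4) by simp
    finally show ?thesis .
  qed
  have 1: "(\<Sum>a\<in>{1..n}. \<Prod>x\<in>V. (if x\<in>e then (if S x = a then 1 else 0) else 1))
     = (\<Sum>a\<in>{1..n}. (if S u = a \<and> S v = a then 1 else 0::real))" by (simp only: eq)
  also have "\<dots> = (if S u = S v then 1 else 0)"
  proof (cases "S u = S v")
    case True then show ?thesis using assms(5) by (simp add: sum.delta)
  next
    case False then show ?thesis by (auto intro: sum.neutral)
  qed
  also have "\<dots> = X e S"
    unfolding X_def using assms(3,4) by (auto simp: doubleton_eq_iff)
  finally show ?thesis by simp
qed

lemma XX_rep:
  assumes "finite V" "e \<subseteq> V" "e = {u, v}" "u \<noteq> v" "f \<subseteq> V" "f = {u', v'}" "u' \<noteq> v'"
    "S \<in> PiE V (\<lambda>_. {1..n})"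
  shows "X e S * X f S = (\<Sum>a\<in>{1..n}. \<Sum>b\<in>{1..n}. \<Prod>x\<in>V. H e f a b x (S x))"
proof -
  have in1: "S u \<in> {1..n}" "S v \<in> {1..n}" "S u' \<in> {1..n}" "S v' \<in> {1..n}"
    using assms by (auto simp: PiE_def Pi_def)
  show ?thesis
    unfolding X_rep[OF assms(1,2,3,4) in1(1,2)] X_rep[OF assms(1,5,6,7) in1(3,4)] sum_product H_def
    by (simp add: prod.distrib)
qed

lemma ind_mult: "(if c=(a::nat) then 1 else 0) * (if c=b then 1 else 0) = (if c = a \<and> c = b then 1 else (0::real))"
  by simp

lemma sumH:
  assumes "a \<in> {1..n}" "b \<in> {1..n}" "(\<Sum>i=1..n. P i) = 1"
  shows "(\<Sum>c\<in>{1..n}. P c * H e f a b x c) =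
    (if x \<in> e \<inter> f then (if a = b then P a else 0) else 1) * (if x \<in> e - f then P a else 1) * (if x \<in> f - e then P b else 1)"
  using assms unfolding H_def
  by (auto simp: ind_mult sum.delta if_distrib[of "\<lambda>z. P _ * z"] cong: if_cong intro!: sum.neutral)

lemma prod_ifs:
  assumes "finite V" "D \<subseteq> V"
  shows "(\<Prod>x\<in>V. (if x \<in> D then c else 1)) = (c::real) ^ card D"
  using prod.inter_restrict[OF assms(1), of "\<lambda>_. c" D] assms(2)
  by (simp add: Int_absorb2 inf.commute)

lemma mom:
  assumes "finite V" "e \<subseteq> V" "e = {u, v}" "u \<noteq> v" "f \<subseteq> V" "f = {u', v'}" "u' \<noteq> v'"
    "(\<Sum>i=1..n. P i) = 1"
  shows "Expt n V P (\<lambda>S. X e S * X f S) = (\<Sum>a\<in>{1..n}. \<Sum>b\<in>{1..n}.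
     (if a = b then P a else 0) ^ card (e \<inter> f) * P a ^ card (e - f) * P b ^ card (f - e))"
proof -
  have "Expt n V P (\<lambda>S. X e S * X f S) = Expt n V P (\<lambda>S. \<Sum>a\<in>{1..n}. \<Sum>b\<in>{1..n}. \<Prod>x\<in>V. H e f a b x (S x))"
    by (rule Expt_cong) (rule XX_rep[OF assms(1-7)])
  also have "\<dots> = (\<Sum>a\<in>{1..n}. \<Sum>b\<in>{1..n}. \<Prod>x\<in>V. \<Sum>c\<in>{1..n}. P c * H e f a b x c)"
    by (simp add: Expt_sum Expt_prod[OF assms(1)])
  also have "\<dots> = (\<Sum>a\<in>{1..n}. \<Sum>b\<in>{1..n}.
     (if a = b then P a else 0) ^ card (e \<inter> f) * P a ^ card (e - f) * P b ^ card (f - e))"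
  proof (intro sum.cong refl)
    fix a b assume ab: "a \<in> {1..n}" "b \<in> {1..n}"
    have "(\<Prod>x\<in>V. \<Sum>c\<in>{1..n}. P c * H e f a b x c) = (\<Prod>x\<in>V.
      (if x \<in> e \<inter> f then (if a = b then P a else 0) else 1) * (if x \<in> e - f then P a else 1) * (if x \<in> f - e then P b else 1))"
      by (rule prod.cong[OF refl], rule sumH[OF ab assms(8)])
    also have "\<dots> = (if a = b then P a else 0) ^ card (e \<inter> f) * P a ^ card (e - f) * P b ^ card (f - e)"
      unfolding prod.distrib using assms(2,5)
      by (subst (1 2 3) prod_ifs[OF assms(1)]) auto
    finally show "(\<Prod>x\<in>V. \<Sum>c\<in>{1..n}. P c * H e f a b x c) = (if a = b then P a else 0) ^ card (e \<inter> f) * P a ^ card (e - f) * P b ^ card (f - e)" .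
  qed
  finally show ?thesis .
qed




lemma edge_of: "comparison_graph V E \<Longrightarrow> e \<in> E \<Longrightarrow> \<exists>u v. e = {u, v} \<and> u \<noteq> v \<and> u \<in> V \<and> v \<in> V"
  unfolding comparison_graph_def by blast

lemma mom_cases:
  assumes G: "comparison_graph V E" and eE: "e \<in> E" and fE: "f \<in> E" and P1: "(\<Sum>i=1..n. P i) = 1"
  shows "Expt n V P (\<lambda>S. X e S * X f S) =
    (if e = f then (\<Sum>a=1..n. P a ^ 2) else if e \<inter> f \<noteq> {} then (\<Sum>a=1..n. P a ^ 3)
     else (\<Sum>a=1..n. P a ^ 2)^2)"
proof -
  have fV: "finite V" using G unfolding comparison_graph_def by auto
  obtain u v where e: "e = {u, v}" "u \<noteq> v" "u \<in> V" "v \<in> V" using edge_of[OF G eE] by blast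
  obtain u' v' where f: "f = {u', v'}" "u' \<noteq> v'" "u' \<in> V" "v' \<in> V" using edge_of[OF G fE] by blast
  have M: "Expt n V P (\<lambda>S. X e S * X f S) = (\<Sum>a\<in>{1..n}. \<Sum>b\<in>{1..n}.
     (if a = b then P a else 0) ^ card (e \<inter> f) * P a ^ card (e - f) * P b ^ card (f - e))"
    by (rule mom[OF fV _ e(1,2) _ f(1,2) P1]) (use e f in auto)
  have ce: "card e = 2" "card f = 2" "finite e" "finite f" using e f by auto
  have dE: "card (e - f) = 2 - card (e \<inter> f)" "card (f - e) = 2 - card (e \<inter> f)"
    using card_Diff_subset_Int[of e f] card_Diff_subset_Int[of f e] ce by (auto simp: Int_commute)
  have le: "card (e \<inter> f) \<le> 2" using card_mono[OF ce(3), of "e \<inter> f"] ce by auto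
  show ?thesis
  proof (cases "e = f")
    case True
    then have "card (e \<inter> f) = 2" using ce by simp
    then have "Expt n V P (\<lambda>S. X e S * X f S) = (\<Sum>a\<in>{1..n}. \<Sum>b\<in>{1..n}. (if a = b then P a ^ 2 else 0))"
      using M dE by (simp add: if_distrib[of "\<lambda>z. z^2"] cong: if_cong)
    then show ?thesis using True by simp
  next
    case ne: False
    show ?thesis
    proof (cases "e \<inter> f = {}")
      case True
      then have "card (e \<inter> f) = 0" by simp
      then have "Expt n V P (\<lambda>S. X e S * X f S) = (\<Sum>a\<in>{1..n}. \<Sum>b\<in>{1..n}. P a ^ 2 * P b ^ 2)"
        using M dE by simp
      then show ?thesis using True ne by (simp add: power2_eq_square[of "sum _ _"] sum_product)
    next
      case False
      have "card (e \<inter> f) \<noteq> 0" using False ce by auto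
      moreover have "card (e \<inter> f) \<noteq> 2"
      proof
        assume "card (e \<inter> f) = 2"
        then have "e \<inter> f = e" using card_subset_eq[OF ce(3), of "e \<inter> f"] ce by auto
        moreover have "e \<inter> f = f" using card_subset_eq[OF ce(4), of "e \<inter> f"] ce \<open>card (e \<inter> f) = 2\<close> by auto
        ultimately show False using ne by auto
      qed
      ultimately have c1: "card (e \<inter> f) = 1" using le by linarith
      have "Expt n V P (\<lambda>S. X e S * X f S) = (\<Sum>a\<in>{1..n}. \<Sum>b\<in>{1..n}. (if a = b then P a ^ 3 else 0))"
      proof -
        have h: "\<And>a b. (if a = b then P a else 0) * P a * P b = (if a = b then P a ^ 3 else 0)"
          by (simp add: power3_eq_cube)
        show ?thesis using M dE c1 by (simp only: h power_one_right power_0 mult_1_right One_nat_def[symmetric] diff_self_eq_0 numeral_2_eq_2 diff_Suc_1)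
      qed
      then show ?thesis using False ne by simp
    qed
  qed
qed




lemma count_pairs:
  assumes G: "comparison_graph V E"
  shows "card {(e, f). e \<in> E \<and> f \<in> E \<and> e \<noteq> f \<and> e \<inter> f \<noteq> {}} = cG V E"
proof -
  let ?T = "{(u, v, w). u \<in> V \<and> v \<in> V \<and> w \<in> V \<and> u \<noteq> v \<and> v \<noteq> w \<and> u \<noteq> w
                     \<and> {u, v} \<in> E \<and> {v, w} \<in> E}"
  let ?Q = "{(e, f). e \<in> E \<and> f \<in> E \<and> e \<noteq> f \<and> e \<inter> f \<noteq> {}}"
  let ?phi = "\<lambda>(u, v, w). ({u, v}, {v, w})"
  have "inj_on ?phi ?T"
  proof (rule inj_onI)
    fix x y assume x: "x \<in> ?T" and y: "y \<in> ?T" and eq: "?phi x = ?phi y"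
    obtain u v w where xx: "x = (u, v, w)" by (cases x) auto
    obtain u' v' w' where yy: "y = (u', v', w')" by (cases y) auto
    have d: "u \<noteq> v" "v \<noteq> w" "u \<noteq> w" "u' \<noteq> v'" "v' \<noteq> w'" "u' \<noteq> w'" using x y xx yy by auto
    have e1: "{u, v} = {u', v'}" "{v, w} = {v', w'}" using eq xx yy by auto
    have "{u, v} \<inter> {v, w} = {v}" using d by auto
    moreover have "{u', v'} \<inter> {v', w'} = {v'}" using d by auto
    ultimately have "v = v'" using e1 by auto
    then show "x = y" using e1 d xx yy by (auto simp: doubleton_eq_iff)
  qed
  moreover have "?phi ` ?T = ?Q"
  proof
    show "?phi ` ?T \<subseteq> ?Q" by (auto simp: doubleton_eq_iff)
  next
    show "?Q \<subseteq> ?phi ` ?T"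
    proof
      fix p assume p: "p \<in> ?Q"
      obtain e f where pp: "p = (e, f)" "e \<in> E" "f \<in> E" "e \<noteq> f" "e \<inter> f \<noteq> {}" using p by auto
      obtain v where v: "v \<in> e" "v \<in> f" using pp by auto
      obtain a b where e: "e = {a, b}" "a \<noteq> b" "a \<in> V" "b \<in> V" using edge_of[OF G pp(2)] by blast
      obtain a' b' where f: "f = {a', b'}" "a' \<noteq> b'" "a' \<in> V" "b' \<in> V" using edge_of[OF G pp(3)] by blast
      obtain u where u: "e = {u, v}" "u \<noteq> v" "u \<in> V" using e v by auto
      obtain w where w: "f = {v, w}" "w \<noteq> v" "w \<in> V" using f v by auto
      have "u \<noteq> w" using u w pp(4) by auto
      moreover have "v \<in> V" using v e by auto
      ultimately have "(u, v, w) \<in> ?T" using u w pp by auto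
      moreover have "p = ?phi (u, v, w)" using pp u w by auto
      ultimately show "p \<in> ?phi ` ?T" by blast
    qed
  qed
  ultimately have "bij_betw ?phi ?T ?Q" unfolding bij_betw_def by blast
  then show ?thesis unfolding cG_def by (simp add: bij_betw_same_card)
qed




definition Zf :: "'a set set \<Rightarrow> ('a \<Rightarrow> nat) \<Rightarrow> real" where
  "Zf E S = (\<Sum>e\<in>E. X e S)"

lemma XX: "X e S * X e S = X e S" unfolding X_def by simp

lemma fin_E: "comparison_graph V E \<Longrightarrow> finite E"
proof -
  assume G: "comparison_graph V E"
  have "E \<subseteq> Pow V" using G unfolding comparison_graph_def by auto
  moreover have "finite V" using G unfolding comparison_graph_def by auto
  ultimately show ?thesis using finite_subset by blast
qed

lemma EZ:
  assumes G: "comparison_graph V E" and P1: "(\<Sum>i=1..n. P i) = 1"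
  shows "Expt n V P (Zf E) = real (card E) * (\<Sum>a=1..n. P a ^ 2)"
proof -
  have "Expt n V P (Zf E) = (\<Sum>e\<in>E. Expt n V P (\<lambda>S. X e S * X e S))"
    unfolding Zf_def XX by (rule Expt_sum)
  also have "\<dots> = (\<Sum>e\<in>E. (\<Sum>a=1..n. P a ^ 2))"
    using mom_cases[OF G _ _ P1] by simp
  finally show ?thesis by simp
qed

lemma count_sum:
  assumes G: "comparison_graph V E"
  shows "(\<Sum>e\<in>E. \<Sum>f\<in>E. (if e \<noteq> f \<and> e \<inter> f \<noteq> {} then 1 else 0::real)) = real (cG V E)"
proof -
  have fE: "finite E" using fin_E[OF G] .
  have "(\<Sum>e\<in>E. \<Sum>f\<in>E. (if e \<noteq> f \<and> e \<inter> f \<noteq> {} then 1 else 0::real))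
      = (\<Sum>p\<in>E \<times> E. (if fst p \<noteq> snd p \<and> fst p \<inter> snd p \<noteq> {} then 1 else 0::real))"
    by (simp add: sum.cartesian_product split_beta)
  also have "\<dots> = real (card ((E \<times> E) \<inter> {p. fst p \<noteq> snd p \<and> fst p \<inter> snd p \<noteq> {}}))"
    using fE by (simp add: sum.If_cases)
  also have "(E \<times> E) \<inter> {p. fst p \<noteq> snd p \<and> fst p \<inter> snd p \<noteq> {}} = {(e, f). e \<in> E \<and> f \<in> E \<and> e \<noteq> f \<and> e \<inter> f \<noteq> {}}"
    by auto
  finally show ?thesis using count_pairs[OF G] by simp
qed

lemma EZ2:
  assumes G: "comparison_graph V E" and P1: "(\<Sum>i=1..n. P i) = 1"
  defines "p2 \<equiv> (\<Sum>a=1..n. P a ^ 2)" and "p3 \<equiv> (\<Sum>a=1..n. P a ^ 3)"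
  shows "Expt n V P (\<lambda>S. (Zf E S)^2) = (real (card E))^2 * p2^2 + real (card E) * (p2 - p2^2) + real (cG V E) * (p3 - p2^2)"
proof -
  have fE: "finite E" using fin_E[OF G] .
  have "Expt n V P (\<lambda>S. (Zf E S)^2) = Expt n V P (\<lambda>S. \<Sum>e\<in>E. \<Sum>f\<in>E. X e S * X f S)"
    unfolding Zf_def power2_eq_square sum_product by simp
  also have "\<dots> = (\<Sum>e\<in>E. \<Sum>f\<in>E. Expt n V P (\<lambda>S. X e S * X f S))"
    by (simp add: Expt_sum)
  also have "\<dots> = (\<Sum>e\<in>E. \<Sum>f\<in>E. p2^2 + (if e = f then 1 else 0) * (p2 - p2^2)
       + (if e \<noteq> f \<and> e \<inter> f \<noteq> {} then 1 else 0) * (p3 - p2^2))"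
    by (intro sum.cong refl, subst mom_cases[OF G _ _ P1]) (auto simp: p2_def p3_def)
  also have "\<dots> = (\<Sum>e\<in>E. \<Sum>f\<in>E. p2^2) + (\<Sum>e\<in>E. \<Sum>f\<in>E. (if e = f then 1 else 0)) * (p2 - p2^2)
       + (\<Sum>e\<in>E. \<Sum>f\<in>E. (if e \<noteq> f \<and> e \<inter> f \<noteq> {} then 1 else 0)) * (p3 - p2^2)"
    by (simp add: sum.distrib sum_distrib_right)
  also have "\<dots> = (real (card E))^2 * p2^2 + real (card E) * (p2 - p2^2) + real (cG V E) * (p3 - p2^2)"
    using count_sum[OF G] fE by (simp add: power2_eq_square)
  finally show ?thesis .
qed

lemma Var:
  assumes G: "comparison_graph V E" and P1: "(\<Sum>i=1..n. P i) = 1"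
  defines "p2 \<equiv> (\<Sum>a=1..n. P a ^ 2)" and "p3 \<equiv> (\<Sum>a=1..n. P a ^ 3)"
  shows "Expt n V P (\<lambda>S. (Zf E S - real (card E) * p2)^2) = real (card E) * (p2 - p2^2) + real (cG V E) * (p3 - p2^2)"
proof -
  have fV: "finite V" using G unfolding comparison_graph_def by auto
  let ?mu = "real (card E) * p2"
  have "Expt n V P (\<lambda>S. (Zf E S - ?mu)^2) = Expt n V P (\<lambda>S. (Zf E S)^2 - (2 * ?mu * Zf E S - ?mu^2 * 1))"
    by (rule Expt_cong) (simp add: power2_eq_square algebra_simps)
  also have "\<dots> = Expt n V P (\<lambda>S. (Zf E S)^2) - (2 * ?mu * Expt n V P (Zf E) - ?mu^2 * Expt n V P (\<lambda>S. 1))"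
    by (simp only: Expt_diff Expt_cmult)
  also have "\<dots> = real (card E) * (p2 - p2^2) + real (cG V E) * (p3 - p2^2)"
    unfolding EZ2[OF G P1] EZ[OF G P1] Expt_one[OF fV P1] p2_def p3_def by (simp add: power2_eq_square)
  finally show ?thesis .
qed




lemma unif_num:
  fixes m n e t :: real
  assumes n: "n \<ge> 1" and e: "0 < e" and t: "0 < t" and m: "m \<ge> 4 * n / (t^2 * e^4)"
  shows "m * (1/n - (1/n)^2) \<le> (m * t * e^2 / n)^2 / 4"
proof -
  have pos: "t^2 * e^4 > 0" using e t by simp
  have m4: "m * (t^2 * e^4) \<ge> 4 * n" using m pos by (simp add: pos_divide_le_eq)
  have mpos: "m > 0"
  proof -
    have "m * (t^2 * e^4) > 0" using m4 n by linarith
    then show ?thesis using pos by (simp add: zero_less_mult_iff)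
  qed
  have "m * (1/n - (1/n)^2) \<le> m / n" using mpos n by (simp add: divide_simps)
  also have "\<dots> \<le> (m * t * e^2 / n)^2 / 4"
  proof -
    have "(m * t * e^2 / n)^2 / 4 = (m / n) * (m * (t^2 * e^4)) / (4 * n)"
      using n by (simp add: power2_eq_square power4_eq_xxxx field_simps)
    also have "\<dots> \<ge> (m / n) * (4 * n) / (4 * n)"
      by (intro divide_right_mono mult_left_mono m4) (use mpos n in auto)
    finally show ?thesis using n by simp
  qed
  finally show ?thesis .
qed

lemma far_num:
  fixes m c n e t d s x3 :: real
  assumes n: "n \<ge> 1" and e: "0 < e" "e \<le> 1" and t: "0 < t" "t < 1"
    and m: "m \<ge> 16 * n / ((1 - t)^2 * e^4)" and c: "c \<ge> 0"
    and cm: "c / m^2 \<le> (1 - t)^2 * e^2 / (16 * sqrt n)"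
    and d: "d \<ge> e^2 / n" and s: "s = sqrt d" and x3: "x3 \<le> s * d"
  shows "m * ((1/n + d) - (1/n + d)^2) + c * (d/n + x3 - d^2) \<le> (m * (d - t * e^2 / n))^2 / 4"
proof -
  define K where "K = m^2 * (1-t)^2 * d^2 / 16"
  have pos: "(1 - t)^2 * e^4 > 0" using e t by simp
  have m16: "m * ((1 - t)^2 * e^4) \<ge> 16 * n" using m pos by (simp add: pos_divide_le_eq)
  have mpos: "m > 0"
  proof -
    have "m * ((1 - t)^2 * e^4) > 0" using m16 n by linarith
    then show ?thesis using pos by (simp add: zero_less_mult_iff)
  qed
  have e2n: "e^2 / n > 0" using e n by simp
  have dpos: "d > 0" using d e2n by linarith
  have spos: "s > 0" using s dpos by simp
  have ss: "s * s = d" using s dpos by simp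
  have sqn: "sqrt n \<ge> 1" using n by simp
  have e4e2: "e^4 \<le> e^2" using e by (simp add: power_decreasing[of 2 4 e, simplified])
  have cle: "c \<le> m^2 * ((1 - t)^2 * e^2 / (16 * sqrt n))"
    using cm mpos by (simp add: divide_le_eq mult.commute)
  have tt: "d - t * e^2 / n \<ge> (1 - t) * d"
  proof -
    have "t * (e^2 / n) \<le> t * d" using d t by (intro mult_left_mono) auto
    then show ?thesis by (simp add: algebra_simps)
  qed
  have "(1 - t) * d \<ge> 0" using t dpos by simp
  then have "((1 - t) * d)^2 \<le> (d - t * e^2 / n)^2" using tt by (intro power_mono) auto
  then have "m^2 * ((1 - t) * d)^2 \<le> m^2 * (d - t * e^2 / n)^2" by (intro mult_left_mono) auto
  then have RHS: "(m * (d - t * e^2 / n))^2 / 4 \<ge> 4 * K"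
    unfolding K_def by (simp add: power_mult_distrib mult_ac)
  have d2: "d^2 \<ge> (e^2/n)^2" using d e2n by (intro power_mono) auto
  have a1: "m / n \<le> K"
  proof -
    have "16 * n / n^2 \<le> m * ((1 - t)^2 * e^4) / n^2" using m16 n by (intro divide_right_mono) auto
    also have "m * ((1 - t)^2 * e^4) / n^2 = m * (1-t)^2 * (e^2/n)^2" by (simp add: power2_eq_square power4_eq_xxxx)
    also have "\<dots> \<le> m * (1-t)^2 * d^2" using d2 mpos t by (intro mult_left_mono) auto
    finally have "16 * n / n^2 \<le> m * (1-t)^2 * d^2" .
    moreover have "16 * n / n^2 = 16 / n" using n by (simp add: power2_eq_square)
    ultimately have "m * (1-t)^2 * d^2 \<ge> 16 / n" by simp
    then have "m * (m * (1-t)^2 * d^2) \<ge> m * (16 / n)" using mpos by (intro mult_left_mono) auto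
    moreover have "16 * K = m * (m * (1-t)^2 * d^2)" unfolding K_def by (simp add: power2_eq_square)
    moreover have "m * (16 / n) = 16 * (m / n)" by simp
    ultimately show ?thesis by linarith
  qed
  have a2: "m * d \<le> K"
  proof -
    have "16 * n / n \<le> m * ((1 - t)^2 * e^4) / n" using m16 n by (intro divide_right_mono) auto
    also have "m * ((1 - t)^2 * e^4) / n = m * (1-t)^2 * (e^4/n)" by simp
    also have "\<dots> \<le> m * (1-t)^2 * (e^2/n)" using e4e2 mpos n by (intro mult_left_mono divide_right_mono) auto
    also have "\<dots> \<le> m * (1-t)^2 * d" using d mpos t by (intro mult_left_mono) auto
    finally have "16 * n / n \<le> m * (1-t)^2 * d" .
    then have "m * (1-t)^2 * d \<ge> 16" using n by simp
    then have "(m * d) * (m * (1-t)^2 * d) \<ge> (m * d) * 16" using mpos dpos by (intro mult_left_mono) auto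
    moreover have "16 * K = (m * d) * (m * (1-t)^2 * d)" unfolding K_def by (simp add: power2_eq_square)
    ultimately show ?thesis by linarith
  qed
  have b1: "c * (d / n) \<le> K"
  proof -
    have "c * (d / n) \<le> m^2 * ((1 - t)^2 * e^2 / (16 * sqrt n)) * (d / n)"
      using cle dpos n by (intro mult_right_mono) auto
    also have "\<dots> = (m^2 * (1-t)^2 * d / 16) * (e^2 / n / sqrt n)" by (simp add: field_simps)
    also have "\<dots> \<le> (m^2 * (1-t)^2 * d / 16) * d"
    proof (intro mult_left_mono)
      have "e^2 / n / sqrt n \<le> e^2 / n" using sqn e2n by (simp add: divide_le_eq_1 field_simps)
      then show "e^2 / n / sqrt n \<le> d" using d by linarith
    qed (use mpos dpos in auto)
    finally show ?thesis unfolding K_def by (simp add: power2_eq_square)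
  qed
  have b2: "c * x3 \<le> K"
  proof -
    have "c * x3 \<le> c * (s * d)" using c x3 by (intro mult_left_mono) auto
    also have "\<dots> \<le> m^2 * ((1 - t)^2 * e^2 / (16 * sqrt n)) * (s * d)"
      using cle dpos spos by (intro mult_right_mono) auto
    also have "\<dots> = (m^2 * (1-t)^2 * d / 16) * (e^2 * s / sqrt n)" using sqn by (simp add: field_simps)
    also have "\<dots> \<le> (m^2 * (1-t)^2 * d / 16) * d"
    proof (intro mult_left_mono)
      have "s \<ge> e / sqrt n"
      proof -
        have "sqrt (e^2 / n) \<le> s" using d s by simp
        moreover have "sqrt (e^2 / n) = e / sqrt n" using e n by (simp add: real_sqrt_divide)
        ultimately show ?thesis by simp
      qed
      moreover have "e^2 / sqrt n \<le> e / sqrt n"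
      proof (rule divide_right_mono)
        show "e^2 \<le> e" using e by (simp add: power2_eq_square mult_le_cancel_left1)
      qed (use sqn in auto)
      ultimately have "e^2 / sqrt n \<le> s" by linarith
      then have "s * (e^2 / sqrt n) \<le> s * s" using spos by (intro mult_left_mono) auto
      moreover have "e^2 * s / sqrt n = s * (e^2 / sqrt n)" by simp
      ultimately have "e^2 * s / sqrt n \<le> s * s" by linarith
      then show "e^2 * s / sqrt n \<le> d" using ss by simp
    qed (use mpos dpos in auto)
    finally show ?thesis unfolding K_def by (simp add: power2_eq_square)
  qed
  have "m * ((1/n + d) - (1/n + d)^2) \<le> m * (1/n + d)"
    using mpos by (intro mult_left_mono) auto
  moreover have "c * (d/n + x3 - d^2) \<le> c * (d/n) + c * x3"
    using c by (simp add: algebra_simps)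
  ultimately have "m * ((1/n + d) - (1/n + d)^2) + c * (d/n + x3 - d^2) \<le> m / n + m * d + c * (d/n) + c * x3"
    by (simp add: algebra_simps)
  also have "\<dots> \<le> 4 * K" using a1 a2 b1 b2 by linarith
  also have "\<dots> \<le> (m * (d - t * e^2 / n))^2 / 4" using RHS by linarith
  finally show ?thesis .
qed




lemma cheb:
  assumes fV: "finite V" and Pnn: "\<And>i. i \<in> {1..n} \<Longrightarrow> P i \<ge> 0" and tpos: "t > 0"
    and A: "\<And>S. S \<in> PiE V (\<lambda>_. {1..n}) \<Longrightarrow> A S \<Longrightarrow> t^2 \<le> (Zf E S - mu)^2"
  shows "prob_samples n V P A \<le> Expt n V P (\<lambda>S. (Zf E S - mu)^2) / t^2"
proof -
  have "prob_samples n V P A = Expt n V P (\<lambda>S. if A S then 1 else 0)" by (rule prob_Ex)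
  also have "\<dots> \<le> Expt n V P (\<lambda>S. (1 / t^2) * (Zf E S - mu)^2)"
  proof (rule Expt_mono[OF Pnn])
    fix S assume S: "S \<in> PiE V (\<lambda>_. {1..n})"
    show "(if A S then 1 else 0) \<le> (1 / t^2) * (Zf E S - mu)^2"
    proof (cases "A S")
      case True
      then have "t^2 \<le> (Zf E S - mu)^2" using A S by blast
      then show ?thesis using True tpos by (simp add: field_simps)
    qed simp
  qed
  also have "\<dots> = (1 / t^2) * Expt n V P (\<lambda>S. (Zf E S - mu)^2)" by (rule Expt_cmult)
  also have "\<dots> = Expt n V P (\<lambda>S. (Zf E S - mu)^2) / t^2" by simp
  finally show ?thesis .
qed

lemma prob_compl:
  assumes "finite V" "(\<Sum>i=1..n. P i) = 1"
  shows "prob_samples n V P (\<lambda>S. \<not> A S) = 1 - prob_samples n V P A"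
proof -
  have "prob_samples n V P (\<lambda>S. \<not> A S) = Expt n V P (\<lambda>S. 1 - (if A S then 1 else 0))"
    unfolding prob_Ex by (rule Expt_cong) auto
  also have "\<dots> = 1 - prob_samples n V P A" by (simp only: Expt_diff Expt_one[OF assms] prob_Ex)
  finally show ?thesis .
qed

lemma yes_iff: "finite E \<Longrightarrow> outputs_yes n \<epsilon> E \<tau> S \<longleftrightarrow> Zf E S < real (card E) * (1 + \<tau> * \<epsilon>^2) / real n"
  unfolding outputs_yes_def Zf_def using coll_sum by metis

lemma sq2: "(\<Sum>i\<in>I. (x i + a)^2) = (\<Sum>i\<in>I. x i ^2) + 2 * a * (\<Sum>i\<in>I. x i) + real (card I) * a^2"
  for x :: "'b \<Rightarrow> real"
proof -
  have "(\<Sum>i\<in>I. (x i + a)^2) = (\<Sum>i\<in>I. x i ^2 + (2 * a) * x i + a^2)"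
    by (rule sum.cong) (simp_all add: power2_eq_square algebra_simps)
  also have "\<dots> = (\<Sum>i\<in>I. x i ^2) + (2 * a) * (\<Sum>i\<in>I. x i) + real (card I) * a^2"
    by (simp add: sum.distrib sum_distrib_left)
  finally show ?thesis .
qed

lemma sq3: "(\<Sum>i\<in>I. (x i + a)^3) = (\<Sum>i\<in>I. x i ^3) + 3 * a * (\<Sum>i\<in>I. x i ^ 2) + 3 * a^2 * (\<Sum>i\<in>I. x i) + real (card I) * a^3"
  for x :: "'b \<Rightarrow> real"
proof -
  have "(\<Sum>i\<in>I. (x i + a)^3) = (\<Sum>i\<in>I. x i ^3 + (3 * a) * x i ^ 2 + (3 * a^2) * x i + a^3)"
    by (rule sum.cong) (simp_all add: power2_eq_square power3_eq_cube algebra_simps)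
  also have "\<dots> = (\<Sum>i\<in>I. x i ^3) + (3 * a) * (\<Sum>i\<in>I. x i ^ 2) + (3 * a^2) * (\<Sum>i\<in>I. x i) + real (card I) * a^3"
    by (simp add: sum.distrib sum_distrib_left)
  finally show ?thesis .
qed

lemma cs: "(\<Sum>i\<in>I. y i)^2 \<le> real (card I) * (\<Sum>i\<in>I. y i ^ 2)" for y :: "'b \<Rightarrow> real"
proof -
  have "(\<Sum>i\<in>I. y i)^2 = (\<Sum>i\<in>I. \<Sum>j\<in>I. y i * y j)" by (simp add: power2_eq_square sum_product)
  also have "\<dots> \<le> (\<Sum>i\<in>I. \<Sum>j\<in>I. (y i ^ 2 + y j ^ 2) / 2)"
  proof (intro sum_mono)
    fix i j show "y i * y j \<le> (y i ^ 2 + y j ^ 2) / 2"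
      using sum_squares_ge_zero[of "y i - y j" 0] by (simp add: power2_eq_square algebra_simps)
  qed
  also have "\<dots> = real (card I) * (\<Sum>i\<in>I. y i ^ 2)"
    by (simp add: sum.distrib sum_divide_distrib[symmetric] sum.swap[of "\<lambda>i j. y j ^ 2"] field_simps)
       (simp add: sum_distrib_left mult.commute)
  finally show ?thesis .
qed




theorem theorem1:
  fixes n :: nat and \<epsilon> \<tau> :: real and V :: "'a set" and E :: "'a set set"
  assumes "n \<ge> 1"
    and "0 < \<epsilon>" and "\<epsilon> \<le> 1"
    and "0 < \<tau>" and "\<tau> < 1"
    and "comparison_graph V E"
    and "real (card E) \<ge> 4 * real n / (\<tau>^2 * \<epsilon>^4)"
    and "real (card E) \<ge> 16 * real n / ((1 - \<tau>)^2 * \<epsilon>^4)"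
    and "real (cG V E) / (real (card E))^2 \<le> (1 - \<tau>)^2 * \<epsilon>^2 / (16 * sqrt (real n))"
  shows "is_uniformity_tester n \<epsilon> V E \<tau>"
proof -
  note n = assms(1) and e = assms(2,3) and t = assms(4,5) and G = assms(6)
  have fV: "finite V" using G unfolding comparison_graph_def by auto
  have fE: "finite E" using fin_E[OF G] .
  define m where "m = real (card E)"
  define c where "c = real (cG V E)"
  define T where "T = m * (1 + \<tau> * \<epsilon>^2) / real n"
  have nr: "real n \<ge> 1" using n by simp
  have yes: "\<And>S. outputs_yes n \<epsilon> E \<tau> S \<longleftrightarrow> Zf E S < T"
    using yes_iff[OF fE] unfolding T_def m_def by blast
  have pos1: "\<tau>^2 * \<epsilon>^4 > 0" using e t by simp
  have mpos: "m > 0"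
  proof -
    have "4 * real n / (\<tau>^2 * \<epsilon>^4) > 0" using pos1 nr by simp
    then show ?thesis using assms(7) unfolding m_def by linarith
  qed
  have U1: "(\<Sum>i=1..n. unif n i) = 1" using n by (simp add: unif_def)
  have Unn: "\<And>i. i \<in> {1..n} \<Longrightarrow> unif n i \<ge> 0" by (simp add: unif_def)
  have Up2: "(\<Sum>a=1..n. unif n a ^ 2) = 1 / real n" using n by (simp add: unif_def power2_eq_square)
  have Up3: "(\<Sum>a=1..n. unif n a ^ 3) = (1 / real n)^2" using n by (simp add: unif_def power2_eq_square power3_eq_cube)
  have part1: "prob_samples n V (unif n) (outputs_yes n \<epsilon> E \<tau>) \<ge> 3/4"
  proof -
    define tt where "tt = m * \<tau> * \<epsilon>^2 / real n"
    have ttpos: "tt > 0" unfolding tt_def using mpos t e nr by simp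
    have VarU: "Expt n V (unif n) (\<lambda>S. (Zf E S - m * (\<Sum>a=1..n. unif n a ^ 2))^2) = m * (1/real n - (1/real n)^2)"
      using Var[OF G U1] unfolding m_def Up2 Up3 by simp
    have "prob_samples n V (unif n) (\<lambda>S. \<not> outputs_yes n \<epsilon> E \<tau> S)
        \<le> Expt n V (unif n) (\<lambda>S. (Zf E S - m * (\<Sum>a=1..n. unif n a ^ 2))^2) / tt^2"
    proof (rule cheb[OF fV Unn ttpos])
      fix S assume "\<not> outputs_yes n \<epsilon> E \<tau> S"
      then have "Zf E S \<ge> T" using yes by (simp add: not_less)
      moreover have "T = m * (1/real n) + tt" unfolding T_def tt_def using nr by (simp add: field_simps)
      ultimately have "tt \<le> Zf E S - m * (\<Sum>a=1..n. unif n a ^ 2)" unfolding Up2 by linarith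
      then show "tt^2 \<le> (Zf E S - m * (\<Sum>a=1..n. unif n a ^ 2))^2" using ttpos by (intro power_mono) auto
    qed
    also have "\<dots> \<le> 1/4"
    proof -
      have "m * (1/real n - (1/real n)^2) \<le> (m * \<tau> * \<epsilon>^2 / real n)^2 / 4"
        by (rule unif_num[OF nr e(1) t(1)]) (use assms(7) in \<open>simp add: m_def\<close>)
      then show ?thesis unfolding VarU tt_def[symmetric] using ttpos by (simp add: divide_le_eq)
    qed
    finally have "prob_samples n V (unif n) (\<lambda>S. \<not> outputs_yes n \<epsilon> E \<tau> S) \<le> 1/4" .
    moreover have "prob_samples n V (unif n) (\<lambda>S. \<not> \<not> outputs_yes n \<epsilon> E \<tau> S) = 1 - prob_samples n V (unif n) (\<lambda>S. \<not> outputs_yes n \<epsilon> E \<tau> S)"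
      by (rule prob_compl[OF fV U1])
    ultimately show ?thesis by simp
  qed
  have part2: "prob_samples n V P (\<lambda>S. \<not> outputs_yes n \<epsilon> E \<tau> S) \<ge> 3/4"
    if P: "is_distrib n P" and far: "l1dist n P (unif n) \<ge> \<epsilon>" for P
  proof -
    have P1: "(\<Sum>i=1..n. P i) = 1" and Pnn: "\<And>i. i \<in> {1..n} \<Longrightarrow> P i \<ge> 0"
      using P unfolding is_distrib_def by auto
    define x where "x i = P i - 1 / real n" for i
    define d where "d = (\<Sum>i=1..n. x i ^ 2)"
    define x3 where "x3 = (\<Sum>i=1..n. x i ^ 3)"
    have Px: "\<And>i. P i = x i + 1 / real n" unfolding x_def by simp
    have sx: "(\<Sum>i=1..n. x i) = 0" unfolding x_def using P1 nr by (simp add: sum_subtractf)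
    have p2: "(\<Sum>a=1..n. P a ^ 2) = 1 / real n + d"
      unfolding Px sq2 sx d_def using nr by (simp add: power2_eq_square)
    have p3: "(\<Sum>a=1..n. P a ^ 3) = (1 / real n)^2 + 3 * d / real n + x3"
      unfolding Px sq3 sx d_def x3_def using nr by (simp add: power2_eq_square power3_eq_cube)
    have l1: "l1dist n P (unif n) = (\<Sum>i=1..n. \<bar>x i\<bar>)" unfolding l1dist_def x_def unif_def by simp
    have dge: "d \<ge> \<epsilon>^2 / real n"
    proof -
      have "\<epsilon>^2 \<le> (\<Sum>i=1..n. \<bar>x i\<bar>)^2" using far l1 e by (intro power_mono) auto
      also have "\<dots> \<le> real n * (\<Sum>i=1..n. \<bar>x i\<bar>^2)" using cs[of "\<lambda>i. \<bar>x i\<bar>" "{1..n}"] by simp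
      finally have "\<epsilon>^2 \<le> real n * d" unfolding d_def by simp
      then show ?thesis using nr by (simp add: divide_le_eq mult.commute)
    qed
    have x3le: "x3 \<le> sqrt d * d"
    proof -
      have "x i ^ 3 \<le> sqrt d * x i ^ 2" if i: "i \<in> {1..n}" for i
      proof -
        have "x i ^ 2 \<le> d" unfolding d_def by (rule member_le_sum[OF i]) auto
        then have "\<bar>x i\<bar> \<le> sqrt d" using real_sqrt_le_mono[of "x i ^ 2" d] by simp
        then have "\<bar>x i\<bar> * x i ^ 2 \<le> sqrt d * x i ^ 2" by (intro mult_right_mono) auto
        moreover have "x i ^ 3 \<le> \<bar>x i\<bar> * x i ^ 2"
        proof -
          have "x i ^ 3 = x i * x i ^ 2" by (simp add: power3_eq_cube power2_eq_square)
          also have "\<dots> \<le> \<bar>x i\<bar> * x i ^ 2" by (rule mult_right_mono[OF abs_ge_self]) simp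
          finally show ?thesis .
        qed
        ultimately show ?thesis by linarith
      qed
      then have "x3 \<le> (\<Sum>i=1..n. sqrt d * x i ^ 2)" unfolding x3_def by (intro sum_mono) auto
      then show ?thesis unfolding d_def by (simp add: sum_distrib_left)
    qed
    define tt where "tt = m * (d - \<tau> * \<epsilon>^2 / real n)"
    have ttpos: "tt > 0"
    proof -
      have "\<tau> * \<epsilon>^2 / real n < \<epsilon>^2 / real n" using t e nr by (simp add: divide_strict_right_mono)
      then show ?thesis unfolding tt_def using dge mpos by simp
    qed
    have VarP: "Expt n V P (\<lambda>S. (Zf E S - m * (\<Sum>a=1..n. P a ^ 2))^2)
       = m * ((1/real n + d) - (1/real n + d)^2) + c * (d / real n + x3 - d^2)"
      using Var[OF G P1] unfolding m_def[symmetric] c_def[symmetric] p2 p3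
      by (simp add: power2_eq_square algebra_simps)
    have "prob_samples n V P (outputs_yes n \<epsilon> E \<tau>)
        \<le> Expt n V P (\<lambda>S. (Zf E S - m * (\<Sum>a=1..n. P a ^ 2))^2) / tt^2"
    proof (rule cheb[OF fV Pnn ttpos])
      fix S assume "outputs_yes n \<epsilon> E \<tau> S"
      then have "Zf E S < T" using yes by simp
      moreover have "T = m * (1/real n + d) - tt" unfolding T_def tt_def using nr by (simp add: field_simps)
      ultimately have "tt \<le> m * (\<Sum>a=1..n. P a ^ 2) - Zf E S" unfolding p2 by linarith
      then have "tt^2 \<le> (m * (\<Sum>a=1..n. P a ^ 2) - Zf E S)^2" using ttpos by (intro power_mono) auto
      then show "tt^2 \<le> (Zf E S - m * (\<Sum>a=1..n. P a ^ 2))^2" by (simp add: power2_commute)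
    qed
    also have "\<dots> \<le> 1/4"
    proof -
      have "m * ((1/real n + d) - (1/real n + d)^2) + c * (d / real n + x3 - d^2) \<le> (m * (d - \<tau> * \<epsilon>^2 / real n))^2 / 4"
        by (rule far_num[OF nr e t _ _ _ dge refl x3le])
           (use assms(8,9) in \<open>simp_all add: m_def c_def\<close>)
      then show ?thesis unfolding VarP tt_def[symmetric] using ttpos by (simp add: divide_le_eq)
    qed
    finally have "prob_samples n V P (outputs_yes n \<epsilon> E \<tau>) \<le> 1/4" .
    moreover have "prob_samples n V P (\<lambda>S. \<not> outputs_yes n \<epsilon> E \<tau> S) = 1 - prob_samples n V P (outputs_yes n \<epsilon> E \<tau>)"
      using prob_compl[OF fV P1, of "outputs_yes n \<epsilon> E \<tau>"] by simp
    ultimately show ?thesis by simp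
  qed
  show ?thesis unfolding is_uniformity_tester_def using part1 part2 by blast
qed


end
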